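(* In the setting described in the context, if $\gamma>0$ is a sufficiently small fixed constant, then \[ \frac{1}{(2\pi i)^{d+1}}\int_{\mathcal N\times C^{out}}\frac{G(\mathbf z,t)}{H(\mathbf z,t)}\,\frac{d\mathbf z\,dt}{(z_1\cdots z_d\,t)^{n+1}} = O(\tau^n) \] for some constant $0<\tau<S(\mathbf 1)$.
   Context: Setting: $d\ge1$; $\mathcal{S}\subset\{-1,0,1\}^d\setminus\{\mathbf 0\}$ with positive weights $w_{\mathbf{i}}$, characteristic polynomial $S(\mathbf{z})=\sum_{\mathbf{i}\in\mathcal{S}}w_{\mathbf{i}}\mathbf{z}^{\mathbf{i}}=z_d^{-1}A(\hat{\mathbf{z}})+Q(\hat{\mathbf{z}})+z_dB(\hat{\mathbf{z}})$ with $\hat{\mathbf z}=(z_1,\dots,z_{d-1})$, where $\mathcal{S}$ is symmetric (including weights) over each of the first $d-1$ axes (so $A,Q,B$ are invariant under $z_j\mapsto1/z_j$, $j\le d-1$), $\mathcal{S}$ has a step with $j$th coordinate $+1$ and one with $-1$ for every $j$, and $A(\mathbf 1)=B(\mathbf 1)$ (zero drift). Let $\bar S(\mathbf z)=S(z_1,\dots,z_{d-1},1/z_d)=z_dA(\hat{\mathbf z})+Q(\hat{\mathbf z})+z_d^{-1}B(\hat{\mathbf z})$, $G(\mathbf z,t)=(1+z_1)\cdots(1+z_{d-1})\big(1-tz_1\cdots z_d(Q(\hat{\mathbf z})+2z_dA(\hat{\mathbf z}))\big)$, and $H=H_1H_2H_3$ with $H_1=1-z_d$, $H_2=1-tz_1\cdots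 z_d\bar S(\mathbf z)$, $H_3=1-tz_1\cdots z_d(Q(\hat{\mathbf z})+z_dA(\hat{\mathbf z}))$. Let $C^{out}=\{t\in\mathbb C:|t|=S(\mathbf 1)^{-1}(1+\gamma)\}$. Let $\Gamma$ be the set of $\mathbf w=(\hat{\mathbf w},w_d)$ with $\hat{\mathbf w}\in\{\pm1\}^{d-1}$, $w_d\in\{\pm1,\pm i\}$ and $|S(\hat{\mathbf w},w_d)|=S(\mathbf 1)$. Set $\epsilon=n^{-\alpha}$, $\delta=n^{-\beta}$ with constants satisfying $1/2<\alpha<2\beta$, $\alpha+\beta>1$, $1/3<\beta<1/2$. For $\mathbf w\in\Gamma$ let $\mathcal N_{\mathbf w}=\{\mathbf z\in\mathbb C^d: |z_j|=1\ (1\le j\le d-1),\ |z_d|=1-\epsilon,\ |\arg z_j-\arg w_j|<\delta\ \text{for all } j\}$ and $\mathcal N=\bigcup_{\mathbf w\in\Gamma}\mathcal N_{\mathbf w}$. *)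

theory Defs
  imports "HOL-Analysis.Analysis" "HOL-Library.Landau_Symbols"
begin

text \<open>Points of C^d are functions nat => complex, coordinates 1..d.
  Steps are functions nat => int, coordinates 1..d, zero outside.
  St is the step set, w the weight function.\<close>

definition valid_steps :: "nat \<Rightarrow> (nat \<Rightarrow> int) set \<Rightarrow> ((nat \<Rightarrow> int) \<Rightarrow> real) \<Rightarrow> bool" where
  "valid_steps d St w \<longleftrightarrow> finite St \<and>
     (\<forall>i\<in>St. (\<forall>j\<in>{1..d}. i j \<in> {-1,0,1}) \<and> (\<forall>j. j \<notin> {1..d} \<longrightarrow> i j = 0)
             \<and> i \<noteq> (\<lambda>_. 0) \<and> w i > 0)"

definition symmetric_steps :: "nat \<Rightarrow> (nat \<Rightarrow> int) set \<Rightarrow> ((nat \<Rightarrow> int) \<Rightarrow> real) \<Rightarrow> bool" where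
  "symmetric_steps d St w \<longleftrightarrow>
     (\<forall>j\<in>{1..<d}. \<forall>i\<in>St. i(j := - i j) \<in> St \<and> w (i(j := - i j)) = w i)"

definition all_directions :: "nat \<Rightarrow> (nat \<Rightarrow> int) set \<Rightarrow> bool" where
  "all_directions d St \<longleftrightarrow> (\<forall>j\<in>{1..d}. (\<exists>i\<in>St. i j = 1) \<and> (\<exists>i\<in>St. i j = -1))"

definition charS :: "nat \<Rightarrow> (nat \<Rightarrow> int) set \<Rightarrow> ((nat \<Rightarrow> int) \<Rightarrow> real) \<Rightarrow> (nat \<Rightarrow> complex) \<Rightarrow> complex" where
  "charS d St w z = (\<Sum>i\<in>St. of_real (w i) * (\<Prod>j\<in>{1..d}. z j powi i j))"

definition partS :: "nat \<Rightarrow> (nat \<Rightarrow> int) set \<Rightarrow> ((nat \<Rightarrow> int) \<Rightarrow> real) \<Rightarrow> int \<Rightarrow> (nat \<Rightarrow> complex) \<Rightarrow> complex" where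
  "partS d St w k z = (\<Sum>i\<in>{i\<in>St. i d = k}. of_real (w i) * (\<Prod>j\<in>{1..<d}. z j powi i j))"

definition Apol where "Apol d St w = partS d St w (-1)"
definition Qpol where "Qpol d St w = partS d St w 0"
definition Bpol where "Bpol d St w = partS d St w 1"

definition S1 :: "(nat \<Rightarrow> int) set \<Rightarrow> ((nat \<Rightarrow> int) \<Rightarrow> real) \<Rightarrow> real" where
  "S1 St w = (\<Sum>i\<in>St. w i)"

definition Sbar :: "nat \<Rightarrow> (nat \<Rightarrow> int) set \<Rightarrow> ((nat \<Rightarrow> int) \<Rightarrow> real) \<Rightarrow> (nat \<Rightarrow> complex) \<Rightarrow> complex" where
  "Sbar d St w z = charS d St w (z(d := 1 / z d))"

definition zprod :: "nat \<Rightarrow> (nat \<Rightarrow> complex) \<Rightarrow> complex" where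
  "zprod d z = (\<Prod>j\<in>{1..d}. z j)"

definition Gfun :: "nat \<Rightarrow> (nat \<Rightarrow> int) set \<Rightarrow> ((nat \<Rightarrow> int) \<Rightarrow> real) \<Rightarrow> (nat \<Rightarrow> complex) \<Rightarrow> complex \<Rightarrow> complex" where
  "Gfun d St w z t = (\<Prod>j\<in>{1..<d}. 1 + z j) *
     (1 - t * zprod d z * (Qpol d St w z + 2 * z d * Apol d St w z))"

definition Hfun :: "nat \<Rightarrow> (nat \<Rightarrow> int) set \<Rightarrow> ((nat \<Rightarrow> int) \<Rightarrow> real) \<Rightarrow> (nat \<Rightarrow> complex) \<Rightarrow> complex \<Rightarrow> complex" where
  "Hfun d St w z t = (1 - z d) * (1 - t * zprod d z * Sbar d St w z) *
     (1 - t * zprod d z * (Qpol d St w z + z d * Apol d St w z))"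

definition Gam :: "nat \<Rightarrow> (nat \<Rightarrow> int) set \<Rightarrow> ((nat \<Rightarrow> int) \<Rightarrow> real) \<Rightarrow> (nat \<Rightarrow> complex) set" where
  "Gam d St w = {v. (\<forall>j\<in>{1..<d}. v j \<in> {1, -1}) \<and> v d \<in> {1, -1, \<i>, -\<i>}
                   \<and> (\<forall>j. j \<notin> {1..d} \<longrightarrow> v j = 0)
                   \<and> cmod (charS d St w v) = S1 St w}"

text \<open>Parametrisation: theta 0 is the argument of t, theta j (1 <= j <= d) the argument of z_j.\<close>
definition zpt :: "nat \<Rightarrow> real \<Rightarrow> (nat \<Rightarrow> real) \<Rightarrow> nat \<Rightarrow> complex" where
  "zpt d eps \<theta> j = (if j = d then complex_of_real (1 - eps) else 1) * cis (\<theta> j)"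

definition param_dom :: "nat \<Rightarrow> (nat \<Rightarrow> int) set \<Rightarrow> ((nat \<Rightarrow> int) \<Rightarrow> real) \<Rightarrow> real \<Rightarrow> (nat \<Rightarrow> real) set" where
  "param_dom d St w delta = {\<theta>. \<theta> 0 \<in> {-pi<..pi} \<and>
       (\<exists>v\<in>Gam d St w. \<forall>j\<in>{1..d}. \<bar>\<theta> j - Arg (v j)\<bar> < delta)}"

text \<open>The integral (1/(2 pi i)^(d+1)) int_{N x C^out} G/H dz dt / (z_1...z_d t)^(n+1),
  with eps = n^(-alpha), delta = n^(-beta), |t| = (1+gamma)/S(1); written through the
  standard parametrisation dz_j = i z_j d theta_j, dt = i t d phi.\<close>
definition the_integral :: "nat \<Rightarrow> (nat \<Rightarrow> int) set \<Rightarrow> ((nat \<Rightarrow> int) \<Rightarrow> real) \<Rightarrow> real \<Rightarrow> real \<Rightarrow> real \<Rightarrow> nat \<Rightarrow> complex" where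
  "the_integral d St w \<alpha> \<beta> \<gamma> n =
     (let eps = real n powr (-\<alpha>); delta = real n powr (-\<beta>);
          R = (1 + \<gamma>) / S1 St w
      in (1 / (2 * pi * \<i>) ^ (d + 1)) *
         (LINT \<theta> : param_dom d St w delta | PiM {0..d} (\<lambda>_. lborel).
            (let z = zpt d eps \<theta>; t = complex_of_real R * cis (\<theta> 0)
             in Gfun d St w z t / Hfun d St w z t / (zprod d z * t) ^ (n + 1)
                * (\<Prod>j\<in>{1..d}. \<i> * z j) * (\<i> * t))))"

end

theory Submission
  imports Defs "HOL-Real_Asymp.Real_Asymp"
begin

definition wk :: "nat \<Rightarrow> (nat \<Rightarrow> int) set \<Rightarrow> ((nat \<Rightarrow> int) \<Rightarrow> real) \<Rightarrow> int \<Rightarrow> real" where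
  "wk d St w k = (\<Sum>i\<in>{i\<in>St. i d = k}. w i)"

lemma partS_bound:
  assumes "valid_steps d St w" "\<forall>j\<in>{1..<d}. norm (z j) = 1"
  shows "norm (partS d St w k z) \<le> wk d St w k"
proof -
  have fin: "finite St" using assms(1) by (simp add: valid_steps_def)
  have "norm (partS d St w k z) \<le> (\<Sum>i\<in>{i\<in>St. i d = k}. norm (of_real (w i) * (\<Prod>j\<in>{1..<d}. z j powi i j)))"
    unfolding partS_def by (rule norm_sum)
  also have "\<dots> = (\<Sum>i\<in>{i\<in>St. i d = k}. w i)"
  proof (rule sum.cong[OF refl])
    fix i assume i: "i \<in> {i\<in>St. i d = k}"
    have "w i > 0" using i assms(1) by (auto simp: valid_steps_def)
    moreover have "norm (\<Prod>j\<in>{1..<d}. z j powi i j) = 1"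
      using assms(2) by (subst prod_norm[symmetric]) (auto intro!: prod.neutral simp: norm_power_int)
    ultimately show "norm (of_real (w i) * (\<Prod>j\<in>{1..<d}. z j powi i j)) = w i"
      by (simp add: norm_mult)
  qed
  finally show ?thesis by (simp add: wk_def)
qed

lemma wk_nonneg: "valid_steps d St w \<Longrightarrow> 0 \<le> wk d St w k"
  unfolding wk_def valid_steps_def by (intro sum_nonneg) (simp add: less_imp_le)

lemma S1_split:
  assumes "valid_steps d St w" "d \<ge> 1"
  shows "S1 St w = wk d St w (-1) + wk d St w 0 + wk d St w 1"
proof -
  have fin: "finite St" using assms(1) by (simp add: valid_steps_def)
  have mem: "i d \<in> {-1,0,1}" if "i \<in> St" for i using assms that by (auto simp: valid_steps_def)
  have "wk d St w (-1) + wk d St w 0 + wk d St w 1 =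
     (\<Sum>i\<in>St. (if i d = -1 then w i else 0) + (if i d = 0 then w i else 0) + (if i d = 1 then w i else 0))"
    unfolding wk_def using fin by (simp add: sum.inter_filter sum.distrib)
  also have "\<dots> = (\<Sum>i\<in>St. w i)"
    by (rule sum.cong[OF refl]) (use mem in auto)
  finally show ?thesis by (simp add: S1_def)
qed

lemma charS_cnj: "charS d St w (\<lambda>j. cnj (x j)) = cnj (charS d St w x)"
  unfolding charS_def by (simp add: cnj_sum cnj_prod)

lemma cis_dist: "norm (cis a - cis b) \<le> 2 * \<bar>a - b\<bar>"
proof -
  have "norm (cis a - cis b) \<le> \<bar>cos a - cos b\<bar> + \<bar>sin a - sin b\<bar>"
    using cmod_le[of "cis a - cis b"] by simp
  also have "\<bar>cos a - cos b\<bar> \<le> \<bar>a - b\<bar>"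
  proof -
    have "\<bar>cos a - cos b\<bar> = 2 * \<bar>sin ((a + b) / 2)\<bar> * \<bar>sin ((b - a) / 2)\<bar>"
      by (simp add: cos_diff_cos abs_mult)
    also have "\<dots> \<le> 2 * 1 * \<bar>(b - a) / 2\<bar>"
      by (intro mult_mono abs_sin_x_le_abs_x) auto
    finally show ?thesis by simp
  qed
  also have "\<bar>sin a - sin b\<bar> \<le> \<bar>a - b\<bar>"
  proof -
    have "\<bar>sin a - sin b\<bar> = 2 * \<bar>sin ((a - b) / 2)\<bar> * \<bar>cos ((a + b) / 2)\<bar>"
      by (simp add: sin_diff_sin abs_mult)
    also have "\<dots> \<le> 2 * \<bar>(a - b) / 2\<bar> * 1"
      by (intro mult_mono abs_sin_x_le_abs_x) auto
    finally show ?thesis by simp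
  qed
  finally show ?thesis by simp
qed

lemma single_diff:
  fixes a b :: complex and k :: int
  assumes "norm b = 1" "norm (a - b) \<le> r" "r \<le> 1/2" "k \<in> {-1,0,1}"
  shows "norm (a powi k) \<le> 2 \<and> norm (a powi k - b powi k) \<le> 2 * r"
proof -
  have r0: "0 \<le> r" using assms(2) norm_ge_zero order_trans by blast
  have "norm b \<le> norm a + norm (a - b)"
    using norm_triangle_ineq[of a "b - a"] by (simp add: norm_minus_commute)
  hence na: "norm a \<ge> 1/2" using assms by simp
  have "norm a \<le> norm b + norm (a - b)"
    using norm_triangle_ineq[of b "a - b"] by simp
  hence na2: "norm a \<le> 3/2" using assms by simp
  have a0: "a \<noteq> 0" using na by auto
  have b0: "b \<noteq> 0" using assms(1) by auto
  consider "k = -1" | "k = 0" | "k = 1" using assms(4) by auto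
  then show ?thesis
  proof cases
    case 1
    have ia: "norm (inverse a) \<le> 2"
    proof -
      have "inverse (norm a) \<le> inverse (1/2::real)"
        using na by (intro le_imp_inverse_le) auto
      thus ?thesis by (simp add: norm_inverse)
    qed
    have "inverse a - inverse b = - (inverse a * (a - b) * inverse b)"
      using a0 b0 by (rule inverse_diff_inverse)
    hence "norm (inverse a - inverse b) = norm (inverse a) * norm (a - b)"
      using assms(1) by (simp add: norm_mult norm_inverse)
    also have "\<dots> \<le> 2 * r"
      using ia assms(2) r0 by (intro mult_mono) auto
    finally show ?thesis using 1 ia by (simp add: power_int_minus)
  next
    case 2 then show ?thesis using r0 by simp
  next
    case 3 then show ?thesis using na2 assms(2) r0 by simp
  qed
qed

lemma mono_diff:
  fixes a b :: "nat \<Rightarrow> complex"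
  assumes "finite J" "\<forall>j\<in>J. norm (b j) = 1 \<and> norm (a j - b j) \<le> r \<and> k j \<in> {-1,0,1}" "0 \<le> r" "r \<le> 1/2"
  shows "norm ((\<Prod>j\<in>J. a j powi k j) - (\<Prod>j\<in>J. b j powi k j)) \<le> (2 ^ card J - 1) * (2*r)"
  using assms(1,2)
proof (induction J rule: finite_induct)
  case empty then show ?case by simp
next
  case (insert x F)
  let ?A = "\<Prod>j\<in>F. a j powi k j" and ?B = "\<Prod>j\<in>F. b j powi k j"
  have s: "norm (a x powi k x) \<le> 2 \<and> norm (a x powi k x - b x powi k x) \<le> 2 * r"
    using insert.prems assms(4) by (intro single_diff) auto
  have nb: "norm ?B = 1"
    using insert.prems by (subst prod_norm[symmetric]) (auto intro!: prod.neutral simp: norm_power_int)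
  have nbx: "norm (b x powi k x) = 1" using insert.prems by (simp add: norm_power_int)
  have IH: "norm (?A - ?B) \<le> (2 ^ card F - 1) * (2*r)" using insert by auto
  have "(\<Prod>j\<in>insert x F. a j powi k j) - (\<Prod>j\<in>insert x F. b j powi k j)
        = a x powi k x * (?A - ?B) + (a x powi k x - b x powi k x) * ?B"
    using insert.hyps by (simp add: algebra_simps)
  also have "norm \<dots> \<le> norm (a x powi k x) * norm (?A - ?B) + norm (a x powi k x - b x powi k x) * norm ?B"
    by (rule order_trans[OF norm_triangle_ineq]) (simp add: norm_mult)
  also have "\<dots> \<le> 2 * ((2 ^ card F - 1) * (2*r)) + 2 * r * 1"
    using s IH nb assms(3) by (intro add_mono mult_mono) auto
  also have "\<dots> = (2 ^ card (insert x F) - 1) * (2*r)"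
    using insert.hyps by (simp add: algebra_simps)
  finally show ?case .
qed

lemma cis_Arg_norm1: "norm v = 1 \<Longrightarrow> cis (Arg v) = v"
  by (subst cis_Arg) (auto simp: sgn_div_norm)

lemma Sbar_lower:
  assumes vs: "valid_steps d St w" and d1: "d \<ge> 1" and v: "v \<in> Gam d St w"
    and th: "\<forall>j\<in>{1..d}. \<bar>\<theta> j - Arg (v j)\<bar> < \<delta>"
    and e0: "0 < \<epsilon>" and e1: "\<epsilon> \<le> 1/2" and rr: "2*\<epsilon> + 2*\<delta> \<le> 1/2"
  shows "norm (Sbar d St w (zpt d \<epsilon> \<theta>)) \<ge> S1 St w - S1 St w * 2^(d+1) * (2*\<epsilon>+2*\<delta>)"
proof -
  define r where "r = 2*\<epsilon> + 2*\<delta>"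
  define z where "z = zpt d \<epsilon> \<theta>"
  define z' where "z' = z(d := 1 / z d)"
  define u where "u = (\<lambda>j. cnj (v j))"
  have fin: "finite St" using vs by (simp add: valid_steps_def)
  have thd: "\<bar>\<theta> d - Arg (v d)\<bar> < \<delta>" using th d1 by auto
  hence d0: "0 \<le> \<delta>" by linarith
  have r0: "0 \<le> r" using e0 d0 r_def by simp
  have vj: "v j \<in> {1,-1}" if "j \<in> {1..<d}" for j using v that by (simp add: Gam_def)
  have vd: "v d \<in> {1,-1,\<i>,-\<i>}" using v by (simp add: Gam_def)
  have nv: "norm (v j) = 1" if "j \<in> {1..d}" for j
  proof (cases "j = d")
    case True then show ?thesis using vd by auto
  next
    case False then have "j \<in> {1..<d}" using that by auto
    from vj[OF this] show ?thesis by (elim insertE) auto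
  qed
  have cv: "cis (Arg (v j)) = v j" if "j \<in> {1..d}" for j using nv[OF that] by (rule cis_Arg_norm1)
  have close: "norm (z' j - u j) \<le> r" if j: "j \<in> {1..d}" for j
  proof (cases "j = d")
    case False
    then have j': "j \<in> {1..<d}" using j by auto
    have "u j = v j" using vj[OF j'] by (auto simp: u_def)
    moreover have "z' j = cis (\<theta> j)" using False by (simp add: z'_def z_def zpt_def)
    ultimately have "norm (z' j - u j) = norm (cis (\<theta> j) - cis (Arg (v j)))" using cv[OF j] by simp
    also have "\<dots> \<le> 2 * \<bar>\<theta> j - Arg (v j)\<bar>" by (rule cis_dist)
    also have "\<dots> \<le> 2 * \<delta>" using th j by (simp add: less_imp_le)
    finally show ?thesis using e0 r_def by simp
  next
    case True
    have ud: "u d = cis (- Arg (v d))" using cv[of d] d1 by (simp add: u_def cis_cnj[symmetric])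
    have ne: "1 - \<epsilon> \<noteq> 0" using e1 by simp
    have zd: "z' d = cis (- \<theta> d) * of_real (1 / (1 - \<epsilon>))"
      using ne by (simp add: z'_def z_def zpt_def cis_inverse[symmetric] field_simps)
    have "z' d - u d = cis (- \<theta> d) * of_real (1 / (1 - \<epsilon>) - 1) + (cis (- \<theta> d) - cis (- Arg (v d)))"
      using zd ud by (simp add: algebra_simps)
    hence "norm (z' d - u d) \<le> norm (cis (- \<theta> d) * of_real (1 / (1 - \<epsilon>) - 1)) + norm (cis (- \<theta> d) - cis (- Arg (v d)))"
      by (metis norm_triangle_ineq)
    also have "norm (cis (- \<theta> d) * of_real (1 / (1 - \<epsilon>) - 1)) = \<bar>1 / (1 - \<epsilon>) - 1\<bar>"
      by (simp only: norm_mult norm_cis norm_of_real mult_1)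
    also have "\<bar>1 / (1 - \<epsilon>) - 1\<bar> \<le> 2 * \<epsilon>"
    proof -
      have "1 / (1 - \<epsilon>) - 1 = \<epsilon> / (1 - \<epsilon>)" using ne by (simp add: field_simps)
      moreover have "\<epsilon> / (1 - \<epsilon>) \<le> 2 * \<epsilon>" using e0 e1 by (simp add: field_simps)
      moreover have "0 \<le> \<epsilon> / (1 - \<epsilon>)" using e0 e1 by simp
      ultimately show ?thesis by (simp only: abs_of_nonneg)
    qed
    also have "norm (cis (- \<theta> d) - cis (- Arg (v d))) \<le> 2 * \<bar>- \<theta> d - - Arg (v d)\<bar>" by (rule cis_dist)
    also have "\<bar>- \<theta> d - - Arg (v d)\<bar> \<le> \<delta>" using thd by linarith
    finally show ?thesis using True r_def by simp
  qed
  have nu: "norm (u j) = 1" if "j \<in> {1..d}" for j using nv[OF that] by (simp add: u_def)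
  have md: "norm ((\<Prod>j\<in>{1..d}. z' j powi i j) - (\<Prod>j\<in>{1..d}. u j powi i j)) \<le> (2 ^ d - 1) * (2*r)"
    if i: "i \<in> St" for i
  proof -
    have "\<forall>j\<in>{1..d}. i j \<in> {-1,0,1}" using vs i by (simp add: valid_steps_def)
    then have "norm ((\<Prod>j\<in>{1..d}. z' j powi i j) - (\<Prod>j\<in>{1..d}. u j powi i j)) \<le> (2 ^ card {1..d} - 1) * (2*r)"
      using close nu r0 rr r_def by (intro mono_diff) auto
    then show ?thesis by simp
  qed
  have "charS d St w z' - charS d St w u = (\<Sum>i\<in>St. of_real (w i) * ((\<Prod>j\<in>{1..d}. z' j powi i j) - (\<Prod>j\<in>{1..d}. u j powi i j)))"
    by (simp add: charS_def sum_subtractf[symmetric] algebra_simps)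
  hence "norm (charS d St w z' - charS d St w u) \<le> (\<Sum>i\<in>St. norm (of_real (w i) * ((\<Prod>j\<in>{1..d}. z' j powi i j) - (\<Prod>j\<in>{1..d}. u j powi i j))))"
    by (simp add: norm_sum)
  also have "\<dots> \<le> (\<Sum>i\<in>St. w i * ((2 ^ d - 1) * (2*r)))"
  proof (rule sum_mono)
    fix i assume i: "i \<in> St"
    have "w i > 0" using vs i by (simp add: valid_steps_def)
    then show "norm (of_real (w i) * ((\<Prod>j\<in>{1..d}. z' j powi i j) - (\<Prod>j\<in>{1..d}. u j powi i j))) \<le> w i * ((2 ^ d - 1) * (2*r))"
      using md[OF i] by (simp add: norm_mult)
  qed
  also have "\<dots> = S1 St w * ((2 ^ d - 1) * (2*r))" by (simp add: S1_def sum_distrib_right)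
  also have "\<dots> \<le> S1 St w * 2^(d+1) * r"
  proof -
    have "S1 St w \<ge> 0" unfolding S1_def using vs by (intro sum_nonneg) (simp add: valid_steps_def less_imp_le)
    moreover have "(2 ^ d - 1) * (2*r) \<le> 2^(d+1) * r" using r0 by (simp add: algebra_simps)
    ultimately show ?thesis by (metis mult.assoc mult_left_mono)
  qed
  finally have diff: "norm (charS d St w z' - charS d St w u) \<le> S1 St w * 2^(d+1) * r" .
  have "norm (charS d St w u) = S1 St w"
    using v by (simp add: u_def charS_cnj Gam_def)
  moreover have "norm (charS d St w u) \<le> norm (charS d St w z') + norm (charS d St w z' - charS d St w u)"
    using norm_triangle_sub[of "charS d St w u" "charS d St w z'"] by (simp add: norm_minus_commute)
  ultimately have "norm (charS d St w z') \<ge> S1 St w - S1 St w * 2^(d+1) * r" using diff by linarith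
  moreover have "Sbar d St w z = charS d St w z'" by (simp add: Sbar_def z'_def)
  ultimately have "norm (Sbar d St w z) \<ge> S1 St w - S1 St w * 2^(d+1) * r" by simp
  then show ?thesis by (simp add: z_def r_def)
qed

lemma divpow: "(p::real) \<noteq> 0 \<Longrightarrow> x / p^(n+1) * p = x / p^n"
  by (simp add: field_simps)

lemma pointwise:
  assumes vs: "valid_steps d St w" and d1: "d \<ge> 1"
    and th: "\<theta> \<in> param_dom d St w \<delta>"
    and e0: "0 < \<epsilon>" and e1: "\<epsilon> \<le> 1/2" and rr: "2*\<epsilon>+2*\<delta> \<le> 1/2"
    and R0: "0 < R"
    and h3: "R * (wk d St w 0 + wk d St w (-1)) < 1"
    and g0: "0 < g"
    and h2: "1 + g \<le> R * (1-\<epsilon>) * (S1 St w - S1 St w * 2^(d+1) * (2*\<epsilon>+2*\<delta>))"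
    and z: "z = zpt d \<epsilon> \<theta>" and t: "t = of_real R * cis (\<theta> 0)"
  shows "norm (Gfun d St w z t / Hfun d St w z t / (zprod d z * t)^(n+1) * (\<Prod>j\<in>{1..d}. \<i> * z j) * (\<i> * t))
     \<le> 2^d * (1 + 2*R*S1 St w) / (\<epsilon> * g * (1 - R*(wk d St w 0 + wk d St w (-1)))) / ((1-\<epsilon>)*R)^n"
proof -
  define c3 where "c3 = 1 - R*(wk d St w 0 + wk d St w (-1))"
  have c3: "0 < c3" using h3 c3_def by simp
  obtain v where v: "v \<in> Gam d St w" and thv: "\<forall>j\<in>{1..d}. \<bar>\<theta> j - Arg (v j)\<bar> < \<delta>"
    using th by (auto simp: param_dom_def)
  have nz: "\<forall>j\<in>{1..<d}. norm (z j) = 1" by (auto simp: z zpt_def)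
  have "norm (z d) = \<bar>1 - \<epsilon>\<bar>" unfolding z zpt_def
    by (simp only: if_True refl norm_mult norm_of_real norm_cis mult_1_right)
  hence nzd: "norm (z d) = 1 - \<epsilon>" using e1 by simp
  have setd: "{1..d} = insert d {1..<d}" using d1 by auto
  have dn: "d \<notin> {1..<d}" by simp
  have zp: "zprod d z = z d * (\<Prod>j\<in>{1..<d}. z j)" unfolding zprod_def setd using dn by simp
  have np1: "norm (\<Prod>j\<in>{1..<d}. z j) = 1"
    using nz by (subst prod_norm[symmetric]) (auto intro!: prod.neutral)
  have nzp: "norm (zprod d z) = 1 - \<epsilon>" using zp nzd np1 by (simp add: norm_mult)
  have nt: "norm t = R" using R0 by (simp add: t norm_mult)
  have nip: "norm (\<Prod>j\<in>{1..d}. \<i> * z j) = 1 - \<epsilon>"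
  proof -
    have "norm (\<Prod>j\<in>{1..d}. \<i> * z j) = (\<Prod>j\<in>{1..d}. norm (z j))"
      by (simp add: prod_norm[symmetric] norm_mult)
    also have "\<dots> = norm (zprod d z)" by (simp add: zprod_def prod_norm)
    finally show ?thesis using nzp by simp
  qed
  have nA: "norm (Apol d St w z) \<le> wk d St w (-1)" unfolding Apol_def using vs nz by (rule partS_bound)
  have nQ: "norm (Qpol d St w z) \<le> wk d St w 0" unfolding Qpol_def using vs nz by (rule partS_bound)
  have S1s: "S1 St w = wk d St w (-1) + wk d St w 0 + wk d St w 1" using vs d1 by (rule S1_split)
  have wpos: "0 \<le> wk d St w k" for k using vs by (rule wk_nonneg)
  have S1pos: "0 \<le> S1 St w" using S1s wpos[of "-1"] wpos[of 0] wpos[of 1] by linarith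
  define CG where "CG = 2^d * (1 + 2*R*S1 St w)"
  have GB: "norm (Gfun d St w z t) \<le> CG"
  proof -
    have p1: "norm (\<Prod>j\<in>{1..<d}. 1 + z j) \<le> 2^d"
    proof -
      have "norm (\<Prod>j\<in>{1..<d}. 1 + z j) = (\<Prod>j\<in>{1..<d}. norm (1 + z j))" by (simp add: prod_norm)
      also have "\<dots> \<le> (\<Prod>j\<in>{1..<d}. (2::real))"
      proof (rule prod_mono)
        fix j assume "j \<in> {1..<d}"
        then have "norm (z j) = 1" using nz by auto
        then show "0 \<le> norm (1 + z j) \<and> norm (1 + z j) \<le> 2"
          using norm_triangle_ineq[of 1 "z j"] by simp
      qed
      also have "\<dots> = 2 ^ (d - 1)" by simp
      also have "\<dots> \<le> 2 ^ d" by (intro power_increasing) auto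
      finally show ?thesis .
    qed
    have nX: "norm (Qpol d St w z + 2 * z d * Apol d St w z) \<le> 2 * S1 St w"
    proof -
      have "norm (Qpol d St w z + 2 * z d * Apol d St w z) \<le> norm (Qpol d St w z) + 2 * norm (z d) * norm (Apol d St w z)"
        by (rule order_trans[OF norm_triangle_ineq]) (simp add: norm_mult)
      also have "\<dots> \<le> wk d St w 0 + 2 * 1 * wk d St w (-1)"
        using nQ nA nzd e0 e1 wpos[of "-1"] by (intro add_mono mult_mono) auto
      finally show ?thesis using S1s wpos[of "-1"] wpos[of 0] wpos[of 1] by linarith
    qed
    have "norm (t * zprod d z * (Qpol d St w z + 2 * z d * Apol d St w z)) \<le> R * 1 * (2 * S1 St w)"
      unfolding norm_mult nt nzp using nX R0 e0 e1 by (intro mult_mono) auto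
    hence p2: "norm (1 - t * zprod d z * (Qpol d St w z + 2 * z d * Apol d St w z)) \<le> 1 + 2*R*S1 St w"
      using norm_triangle_ineq4[of 1 "t * zprod d z * (Qpol d St w z + 2 * z d * Apol d St w z)"] by simp
    have "norm (Gfun d St w z t) \<le> 2^d * (1 + 2*R*S1 St w)"
      unfolding Gfun_def norm_mult using p1 p2 by (intro mult_mono) auto
    then show ?thesis by (simp add: CG_def)
  qed
  have H1: "norm (1 - z d) \<ge> \<epsilon>"
    using norm_triangle_sub[of 1 "z d"] nzd by (simp add: norm_minus_commute)
  have H2: "norm (1 - t * zprod d z * Sbar d St w z) \<ge> g"
  proof -
    have "norm (Sbar d St w z) \<ge> S1 St w - S1 St w * 2^(d+1) * (2*\<epsilon>+2*\<delta>)"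
      unfolding z using vs d1 v thv e0 e1 rr by (rule Sbar_lower)
    hence "R * (1-\<epsilon>) * norm (Sbar d St w z) \<ge> R * (1-\<epsilon>) * (S1 St w - S1 St w * 2^(d+1) * (2*\<epsilon>+2*\<delta>))"
      using R0 e1 by (intro mult_left_mono) auto
    hence "norm (t * zprod d z * Sbar d St w z) \<ge> 1 + g" using h2 by (simp add: norm_mult nt nzp)
    then show ?thesis using norm_triangle_sub[of "t * zprod d z * Sbar d St w z" 1] by (simp add: norm_minus_commute)
  qed
  have H3: "norm (1 - t * zprod d z * (Qpol d St w z + z d * Apol d St w z)) \<ge> c3"
  proof -
    have "norm (Qpol d St w z + z d * Apol d St w z) \<le> norm (Qpol d St w z) + norm (z d) * norm (Apol d St w z)"
      by (rule order_trans[OF norm_triangle_ineq]) (simp add: norm_mult)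
    also have "\<dots> \<le> wk d St w 0 + 1 * wk d St w (-1)"
      using nQ nA nzd e0 e1 wpos[of "-1"] by (intro add_mono mult_mono) auto
    finally have nX: "norm (Qpol d St w z + z d * Apol d St w z) \<le> wk d St w 0 + wk d St w (-1)" by simp
    have "norm (t * zprod d z * (Qpol d St w z + z d * Apol d St w z)) \<le> R * 1 * (wk d St w 0 + wk d St w (-1))"
      unfolding norm_mult nt nzp using nX R0 e0 e1 wpos[of 0] wpos[of "-1"] by (intro mult_mono) auto
    then show ?thesis
      using norm_triangle_sub[of 1 "t * zprod d z * (Qpol d St w z + z d * Apol d St w z)"] c3_def by simp
  qed
  have HB: "norm (Hfun d St w z t) \<ge> \<epsilon> * g * c3"
    unfolding Hfun_def norm_mult using H1 H2 H3 e0 g0 c3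
    by (intro mult_mono) (auto intro: mult_nonneg_nonneg)
  have Hpos: "\<epsilon> * g * c3 > 0" using e0 g0 c3 by simp
  have P: "(1 - \<epsilon>) * R > 0" using e1 R0 by simp
  have "norm (Gfun d St w z t / Hfun d St w z t / (zprod d z * t)^(n+1) * (\<Prod>j\<in>{1..d}. \<i> * z j) * (\<i> * t))
      = norm (Gfun d St w z t) / norm (Hfun d St w z t) / (norm (zprod d z) * norm t)^(n+1) * norm (\<Prod>j\<in>{1..d}. \<i> * z j) * (norm \<i> * norm t)"
    by (simp only: norm_mult norm_divide norm_power)
  also have "\<dots> = norm (Gfun d St w z t) / norm (Hfun d St w z t) / ((1-\<epsilon>)*R)^(n+1) * ((1-\<epsilon>) * R)"
    unfolding nt nzp nip norm_ii by simp
  also have "\<dots> = norm (Gfun d St w z t) / norm (Hfun d St w z t) / ((1-\<epsilon>)*R)^n"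
    using P by (intro divpow) (metis less_irrefl)
  also have "\<dots> \<le> CG / (\<epsilon> * g * c3) / ((1-\<epsilon>)*R)^n"
    using P Hpos HB GB order_trans[OF norm_ge_zero GB] by (intro divide_right_mono frac_le) auto
  finally show ?thesis by (simp add: CG_def c3_def)
qed

lemma int_bound:
  fixes f :: "'a \<Rightarrow> complex"
  assumes K: "K \<in> sets M" and Kf: "emeasure M K < \<infinity>" and B: "0 \<le> B"
    and pw: "\<forall>x\<in>space M. x \<in> A \<longrightarrow> x \<in> K \<and> norm (f x) \<le> B"
  shows "norm (set_lebesgue_integral M A f) \<le> B * measure M K"
proof (cases "integrable M (\<lambda>x. indicator A x *\<^sub>R f x)")
  case False
  then show ?thesis unfolding set_lebesgue_integral_def
    using B by (simp add: not_integrable_integral_eq)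
next
  case True
  have "ennreal (norm (set_lebesgue_integral M A f)) \<le> (\<integral>\<^sup>+x. norm (indicator A x *\<^sub>R f x) \<partial>M)"
    unfolding set_lebesgue_integral_def using True by (rule integral_norm_bound_ennreal)
  also have "\<dots> \<le> (\<integral>\<^sup>+x. ennreal B * indicator K x \<partial>M)"
  proof (rule nn_integral_mono)
    fix x assume x: "x \<in> space M"
    show "ennreal (norm (indicator A x *\<^sub>R f x)) \<le> ennreal B * indicator K x"
    proof (cases "x \<in> A")
      case True then show ?thesis using pw x by (auto simp: indicator_def intro!: ennreal_leI)
    next
      case False then show ?thesis by simp
    qed
  qed
  also have "\<dots> = ennreal B * emeasure M K" using K by (rule nn_integral_cmult_indicator)
  also have "\<dots> = ennreal (B * measure M K)"
    using Kf B by (simp add: emeasure_eq_ennreal_measure ennreal_mult)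
  finally show ?thesis using B by (simp add: ennreal_le_iff)
qed

lemma box_props:
  fixes d :: nat
  shows
  "PiE {0..d} (\<lambda>_. {-5..5::real}) \<in> sets (PiM {0..d} (\<lambda>_. lborel))"
  "emeasure (PiM {0..d} (\<lambda>_. lborel)) (PiE {0..d} (\<lambda>_. {-5..5::real})) < \<infinity>"
proof -
  interpret product_sigma_finite "\<lambda>_. lborel" by standard
  show "PiE {0..d} (\<lambda>_. {-5..5::real}) \<in> sets (PiM {0..d} (\<lambda>_. lborel))"
    by (intro sets_PiM_I_finite) auto
  have "emeasure (PiM {0..d} (\<lambda>_. lborel)) (PiE {0..d} (\<lambda>_. {-5..5::real})) = (\<Prod>i\<in>{0..d}. emeasure lborel {-5..5::real})"
    by (intro emeasure_PiM) auto
  also have "\<dots> = (\<Prod>i\<in>{0..d}. ennreal 10)" by simp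
  also have "\<dots> = ennreal (\<Prod>i\<in>{0..d}. 10)" by (rule prod_ennreal) auto
  also have "\<dots> < \<infinity>" by (simp only: infinity_ennreal_def ennreal_less_top)
  finally show "emeasure (PiM {0..d} (\<lambda>_. lborel)) (PiE {0..d} (\<lambda>_. {-5..5::real})) < \<infinity>" .
qed

lemma B2_gen: "(e::real) \<noteq> 0 \<Longrightarrow> g \<noteq> 0 \<Longrightarrow> c \<noteq> 0 \<Longrightarrow> P \<noteq> 0 \<Longrightarrow>
  CG/(e*g*c)/P^n = CG/(g*c) * (1/e) * (1/P)^n"
  by (simp add: power_one_over)

lemma nq_lim: "(0::real) < q \<Longrightarrow> q < 1 \<Longrightarrow> (\<lambda>n::nat. real n * q ^ n) \<longlonglongrightarrow> 0"
  by real_asymp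

lemma npow_lim: "(0::real) < a \<Longrightarrow> (\<lambda>n::nat. real n powr (-a)) \<longlonglongrightarrow> 0"
  by real_asymp

lemma box_mem:
  assumes "\<theta> \<in> space (PiM {0..d} (\<lambda>_. lborel))" "\<theta> \<in> param_dom d St w dl" "dl \<le> 1"
  shows "\<theta> \<in> PiE {0..d} (\<lambda>_. {-5..5::real})"
proof -
  have ext: "\<theta> \<in> extensional {0..d}" using assms(1) by (simp add: space_PiM PiE_iff)
  obtain v where thv: "\<forall>j\<in>{1..d}. \<bar>\<theta> j - Arg (v j)\<bar> < dl" and t0: "\<theta> 0 \<in> {-pi<..pi}"
    using assms(2) by (auto simp: param_dom_def)
  have "\<theta> j \<in> {-5..5}" if j: "j \<in> {0..d}" for j
  proof (cases "j = 0")
    case True then show ?thesis using t0 pi_less_4 by auto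
  next
    case False
    then have "\<bar>\<theta> j - Arg (v j)\<bar> < dl" using thv j by auto
    moreover have "- pi < Arg (v j) \<and> Arg (v j) \<le> pi" by (rule Arg_bounded)
    ultimately show ?thesis using pi_less_4 assms(3) by auto
  qed
  then show ?thesis using ext by (simp add: PiE_iff)
qed

theorem mainTheorem3:
  fixes d :: nat and St :: "(nat \<Rightarrow> int) set" and w :: "(nat \<Rightarrow> int) \<Rightarrow> real"
    and \<alpha> \<beta> :: real
  assumes "d \<ge> 1"
    and "valid_steps d St w"
    and "symmetric_steps d St w"
    and "all_directions d St"
    and "Apol d St w (\<lambda>_. 1) = Bpol d St w (\<lambda>_. 1)"
    and "1/2 < \<alpha>" and "\<alpha> < 2 * \<beta>" and "\<alpha> + \<beta> > 1" and "1/3 < \<beta>" and "\<beta> < 1/2"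
  shows "\<exists>\<gamma>0>0. \<forall>\<gamma>. 0 < \<gamma> \<and> \<gamma> < \<gamma>0 \<longrightarrow>
           (\<exists>\<tau>. 0 < \<tau> \<and> \<tau> < S1 St w \<and>
              (\<lambda>n. cmod (the_integral d St w \<alpha> \<beta> \<gamma> n)) \<in> O(\<lambda>n. \<tau> ^ n))"
proof -
  have d1: "d \<ge> 1" and vs: "valid_steps d St w" using assms by auto
  have a0: "0 < \<alpha>" and a1: "\<alpha> \<le> 1" and b0: "0 < \<beta>" using assms by auto
  have fin: "finite St" using vs by (simp add: valid_steps_def)
  have dd: "d \<in> {1..d}" using d1 by simp
  have "\<exists>i\<in>St. i d = 1" using assms(4) dd unfolding all_directions_def by blast
  then obtain i1 where i1: "i1 \<in> St" "i1 d = 1" by blast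
  have wpos: "0 \<le> wk d St w k" for k using vs by (rule wk_nonneg)
  have "w i1 \<le> wk d St w 1" unfolding wk_def
    using fin i1 vs by (intro member_le_sum) (auto simp: valid_steps_def less_imp_le)
  moreover have "w i1 > 0" using vs i1 by (simp add: valid_steps_def)
  ultimately have wk1: "wk d St w 1 > 0" by linarith
  have S1s: "S1 St w = wk d St w (-1) + wk d St w 0 + wk d St w 1" using vs d1 by (rule S1_split)
  have S1pos: "S1 St w > 0" using S1s wk1 wpos[of "-1"] wpos[of 0] by linarith
  define \<gamma>0 where "\<gamma>0 = wk d St w 1 / S1 St w"
  have g00: "\<gamma>0 > 0" using wk1 S1pos by (simp add: \<gamma>0_def)
  show ?thesis
  proof (rule exI[of _ \<gamma>0], intro conjI allI impI g00)
    fix \<gamma> :: real assume "0 < \<gamma> \<and> \<gamma> < \<gamma>0"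
    then have ga0: "0 < \<gamma>" and ga1: "\<gamma> < \<gamma>0" by auto
    define S where "S = S1 St w"
    define R where "R = (1 + \<gamma>) / S"
    define g where "g = \<gamma> / 2"
    have gp: "0 < g" by (simp add: g_def ga0)
    define X where "X = wk d St w 0 + wk d St w (-1)"
    define c3 where "c3 = 1 - R * X"
    define \<tau>1 where "\<tau>1 = S / (1 + \<gamma>/2)"
    define \<tau> where "\<tau> = S / (1 + \<gamma>/4)"
    have Spos: "S > 0" using S1pos S_def by simp
    have R0: "R > 0" using Spos ga0 by (simp add: R_def)
    have gS: "\<gamma> * S < wk d St w 1" using ga1 Spos by (simp add: \<gamma>0_def S_def pos_less_divide_eq)
    have XS: "X = S - wk d St w 1" using S1s by (simp add: X_def S_def)
    have "(1 + \<gamma>) * X < S"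
    proof -
      have "(1 + \<gamma>) * X = S + (\<gamma> * S - wk d St w 1) - \<gamma> * wk d St w 1" by (simp add: XS algebra_simps)
      moreover have "\<gamma> * wk d St w 1 \<ge> 0" using ga0 wk1 by simp
      ultimately show ?thesis using gS by linarith
    qed
    hence h3: "R * X < 1" using Spos by (simp add: R_def pos_divide_less_eq)
    have c3: "c3 > 0" using h3 c3_def by simp
    have tau0: "0 < \<tau>" using Spos ga0 by (simp add: \<tau>_def)
    have tauS: "\<tau> < S" using Spos ga0 by (simp add: \<tau>_def field_simps)
    have tau1: "0 < \<tau>1" using Spos ga0 by (simp add: \<tau>1_def)
    define q where "q = \<tau>1 / \<tau>"
    have q0: "0 < q" using tau0 tau1 by (simp add: q_def)
    have q_eq: "q = (1+\<gamma>/4)/(1+\<gamma>/2)" using Spos ga0 by (simp add: q_def \<tau>_def \<tau>1_def)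
    have q1: "q < 1" unfolding q_eq using ga0 by (subst divide_less_eq_1_pos) auto
    define \<epsilon> where "\<epsilon> = (\<lambda>n::nat. real n powr (-\<alpha>))"
    define \<delta> where "\<delta> = (\<lambda>n::nat. real n powr (-\<beta>))"
    have le: "\<epsilon> \<longlonglongrightarrow> 0" unfolding \<epsilon>_def using a0 by (rule npow_lim)
    have ld: "\<delta> \<longlonglongrightarrow> 0" unfolding \<delta>_def using b0 by (rule npow_lim)
    have l2: "(\<lambda>n. 2 * \<epsilon> n + 2 * \<delta> n) \<longlonglongrightarrow> 2 * 0 + 2 * 0"
      by (intro tendsto_intros le ld)
    have l3: "(\<lambda>n. R * (1 - \<epsilon> n) * (S - S * 2^(d+1) * (2 * \<epsilon> n + 2 * \<delta> n))) \<longlonglongrightarrow>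
               R * (1 - 0) * (S - S * 2^(d+1) * (2 * 0 + 2 * 0))"
      by (intro tendsto_intros le ld)
    have l4: "(\<lambda>n. (1 - \<epsilon> n) * R) \<longlonglongrightarrow> (1 - 0) * R"
      by (intro tendsto_intros le)
    have RS: "R * S = 1 + \<gamma>" using Spos by (simp add: R_def)
    have "1/\<tau>1 < R" using Spos ga0 by (simp add: R_def \<tau>1_def field_simps)
    have EV: "eventually (\<lambda>n. n \<ge> 1 \<and> \<epsilon> n \<le> 1/2 \<and> 2 * \<epsilon> n + 2 * \<delta> n \<le> 1/2 \<and> \<delta> n \<le> 1 \<and>
        1 + g < R * (1 - \<epsilon> n) * (S - S * 2^(d+1) * (2 * \<epsilon> n + 2 * \<delta> n)) \<and>
        1/\<tau>1 < (1 - \<epsilon> n) * R \<and> real n * q ^ n < 1) sequentially"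
    proof (intro eventually_conj)
      show "eventually (\<lambda>n. n \<ge> 1) sequentially" by (rule eventually_ge_at_top)
      show "eventually (\<lambda>n. \<epsilon> n \<le> 1/2) sequentially"
        using order_tendstoD(2)[OF le, of "1/2"] by (auto elim: eventually_mono)
      show "eventually (\<lambda>n. 2 * \<epsilon> n + 2 * \<delta> n \<le> 1/2) sequentially"
        using order_tendstoD(2)[OF l2, of "1/2"] by (auto elim: eventually_mono)
      show "eventually (\<lambda>n. \<delta> n \<le> 1) sequentially"
        using order_tendstoD(2)[OF ld, of "1"] by (auto elim: eventually_mono)
      show "eventually (\<lambda>n. 1 + g < R * (1 - \<epsilon> n) * (S - S * 2^(d+1) * (2 * \<epsilon> n + 2 * \<delta> n))) sequentially"
        using order_tendstoD(1)[OF l3, of "1 + g"] RS ga0 by (simp add: g_def)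
      show "eventually (\<lambda>n. 1/\<tau>1 < (1 - \<epsilon> n) * R) sequentially"
        using order_tendstoD(1)[OF l4, of "1/\<tau>1"] \<open>1/\<tau>1 < R\<close> by simp
      show "eventually (\<lambda>n. real n * q ^ n < 1) sequentially"
        using order_tendstoD(2)[OF nq_lim[OF q0 q1], of 1] by simp
    qed
    define M where "M = PiM {0..d} (\<lambda>_. lborel :: real measure)"
    define Bx where "Bx = PiE {0..d} (\<lambda>_. {-5..5::real})"
    define CG where "CG = 2^d * (1 + 2*R*S)"
    define KK where "KK = CG / (g * c3)"
    define Mb where "Mb = measure M Bx"
    have Mb0: "Mb \<ge> 0" by (simp add: Mb_def)
    have "CG > 0" using R0 Spos by (simp add: CG_def add_pos_nonneg)
    hence KK0: "KK > 0" using ga0 c3 by (simp add: KK_def g_def)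
    have main: "eventually (\<lambda>n. norm (cmod (the_integral d St w \<alpha> \<beta> \<gamma> n)) \<le> (KK * Mb) * norm (\<tau> ^ n)) sequentially"
      using EV
    proof (rule eventually_mono)
      fix n :: nat
      assume H: "n \<ge> 1 \<and> \<epsilon> n \<le> 1/2 \<and> 2 * \<epsilon> n + 2 * \<delta> n \<le> 1/2 \<and> \<delta> n \<le> 1 \<and>
        1 + g < R * (1 - \<epsilon> n) * (S - S * 2^(d+1) * (2 * \<epsilon> n + 2 * \<delta> n)) \<and>
        1/\<tau>1 < (1 - \<epsilon> n) * R \<and> real n * q ^ n < 1"
      define e where "e = \<epsilon> n"
      define dl where "dl = \<delta> n"
      have e0: "0 < e" using H by (simp add: e_def \<epsilon>_def)
      have e1: "e \<le> 1/2" and rr: "2*e + 2*dl \<le> 1/2" and dl1: "dl \<le> 1"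
        and h2: "1 + g \<le> R * (1-e) * (S1 St w - S1 St w * 2^(d+1) * (2*e+2*dl))"
        and ht: "1/\<tau>1 < (1 - e) * R" and hq: "real n * q ^ n < 1"
        using H by (auto simp: e_def dl_def S_def)
      define B where "B = CG / (e * g * (1 - R * X)) / ((1-e)*R)^n"
      have eq: "the_integral d St w \<alpha> \<beta> \<gamma> n = (1 / (2 * pi * \<i>) ^ (d + 1)) *
         (LINT \<theta> : param_dom d St w dl | M.
            Gfun d St w (zpt d e \<theta>) (complex_of_real R * cis (\<theta> 0)) / Hfun d St w (zpt d e \<theta>) (complex_of_real R * cis (\<theta> 0))
             / (zprod d (zpt d e \<theta>) * (complex_of_real R * cis (\<theta> 0))) ^ (n + 1)
             * (\<Prod>j\<in>{1..d}. \<i> * zpt d e \<theta> j) * (\<i> * (complex_of_real R * cis (\<theta> 0))))"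
        unfolding the_integral_def Let_def e_def dl_def \<epsilon>_def \<delta>_def R_def S_def M_def ..
      have Bnn: "0 \<le> B" using e0 e1 R0 ga0 c3 Spos
        by (simp add: B_def CG_def g_def c3_def[symmetric])
      have IB: "norm (LINT \<theta> : param_dom d St w dl | M.
            Gfun d St w (zpt d e \<theta>) (complex_of_real R * cis (\<theta> 0)) / Hfun d St w (zpt d e \<theta>) (complex_of_real R * cis (\<theta> 0))
             / (zprod d (zpt d e \<theta>) * (complex_of_real R * cis (\<theta> 0))) ^ (n + 1)
             * (\<Prod>j\<in>{1..d}. \<i> * zpt d e \<theta> j) * (\<i> * (complex_of_real R * cis (\<theta> 0)))) \<le> B * Mb"
        unfolding Mb_def
      proof (rule int_bound)
        show "Bx \<in> sets M" "emeasure M Bx < \<infinity>" unfolding M_def Bx_def by (rule box_props)+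
        show "0 \<le> B" by (rule Bnn)
        show "\<forall>x\<in>space M. x \<in> param_dom d St w dl \<longrightarrow> x \<in> Bx \<and>
          norm (Gfun d St w (zpt d e x) (complex_of_real R * cis (x 0)) / Hfun d St w (zpt d e x) (complex_of_real R * cis (x 0))
             / (zprod d (zpt d e x) * (complex_of_real R * cis (x 0))) ^ (n + 1)
             * (\<Prod>j\<in>{1..d}. \<i> * zpt d e x j) * (\<i> * (complex_of_real R * cis (x 0)))) \<le> B"
        proof (intro ballI impI conjI)
          fix x assume x: "x \<in> space M" and xp: "x \<in> param_dom d St w dl"
          show "x \<in> Bx" unfolding Bx_def using x xp dl1 unfolding M_def by (rule box_mem)
          show "norm (Gfun d St w (zpt d e x) (complex_of_real R * cis (x 0)) / Hfun d St w (zpt d e x) (complex_of_real R * cis (x 0))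
             / (zprod d (zpt d e x) * (complex_of_real R * cis (x 0))) ^ (n + 1)
             * (\<Prod>j\<in>{1..d}. \<i> * zpt d e x j) * (\<i> * (complex_of_real R * cis (x 0)))) \<le> B"
            unfolding B_def CG_def S_def X_def
            by (rule pointwise[OF vs d1 xp e0 e1 rr R0 h3[unfolded X_def] gp h2 refl refl])
        qed
      qed
      have nc: "norm (1 / (2 * pi * \<i>) ^ (d + 1)) \<le> 1"
      proof -
        have "norm (1 / (2 * pi * \<i>) ^ (d + 1)) = 1 / (2 * pi) ^ (d + 1)"
          by (simp add: norm_divide norm_power norm_mult)
        also have "\<dots> \<le> 1"
        proof -
          have "1 \<le> (2*pi)^(d+1)" using pi_gt3 by (intro one_le_power) simp
          then show ?thesis by simp
        qed
        finally show ?thesis .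
      qed
      have Bb: "B \<le> KK * (real n * \<tau>1 ^ n)"
      proof -
        have P: "(1-e)*R > 0" using e1 R0 by simp
        have c3': "1 - R * X \<noteq> 0" using c3 c3_def by simp
        have P0: "(1-e)*R \<noteq> 0" using P by linarith
        have Pn: "((1-e)*R)^n \<noteq> 0" using P0 by (rule power_not_zero)
        have B2: "B = KK * (1/e) * (1/((1-e)*R))^n"
          unfolding B_def KK_def c3_def
          using e0 gp c3' P0 by (intro B2_gen) auto
        have ie: "1/e \<le> real n"
        proof -
          have n1: "real n \<ge> 1" using H by simp
          have "1/e = real n powr \<alpha>" unfolding e_def \<epsilon>_def powr_minus by (simp add: divide_inverse)
          also have "\<dots> \<le> real n powr 1" using n1 a1 by (intro powr_mono) auto
          also have "\<dots> = real n" using n1 by simp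
          finally show ?thesis .
        qed
        have it: "1/((1-e)*R) \<le> \<tau>1"
        proof -
          have "inverse ((1-e)*R) \<le> inverse (1/\<tau>1)"
            using ht tau1 by (intro le_imp_inverse_le) auto
          then show ?thesis by (simp add: divide_inverse)
        qed
        have "B \<le> KK * real n * \<tau>1^n" unfolding B2
          using KK0 ie it e0 P by (intro mult_mono power_mono) auto
        then show ?thesis by (simp add: algebra_simps)
      qed
      have "norm (the_integral d St w \<alpha> \<beta> \<gamma> n) \<le> 1 * (B * Mb)"
        unfolding eq norm_mult using nc IB by (intro mult_mono) auto
      also have "\<dots> \<le> KK * (real n * \<tau>1 ^ n) * Mb" using Bb Mb0 by (simp add: mult_right_mono)
      also have "real n * \<tau>1 ^ n = (real n * q ^ n) * \<tau> ^ n"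
        using tau0 by (simp add: q_def power_divide)
      also have "KK * ((real n * q ^ n) * \<tau> ^ n) * Mb \<le> KK * (1 * \<tau> ^ n) * Mb"
        using hq KK0 Mb0 tau0 by (intro mult_right_mono mult_left_mono) auto
      finally show "norm (cmod (the_integral d St w \<alpha> \<beta> \<gamma> n)) \<le> (KK * Mb) * norm (\<tau> ^ n)"
        using tau0 by (simp add: algebra_simps)
    qed
    have "(\<lambda>n. cmod (the_integral d St w \<alpha> \<beta> \<gamma> n)) \<in> O(\<lambda>n. \<tau> ^ n)"
      using main by (rule bigoI)
    then show "\<exists>\<tau>. 0 < \<tau> \<and> \<tau> < S1 St w \<and> (\<lambda>n. cmod (the_integral d St w \<alpha> \<beta> \<gamma> n)) \<in> O(\<lambda>n. \<tau> ^ n)"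
      using tau0 tauS by (auto simp: S_def)
  qed
qed

end
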